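(* Let $f:\mathbb{R}^d\to\mathbb{R}$ be Lipschitz continuous and SISTr. For $\delta>0$ and $x\in\mathbb{R}^d$, let $\epsilon_{x,\delta}>0$ be the smallest number such that $$\min\{f(x+\epsilon_{x,\delta}\mathbf{1})-f(x),\ f(x)-f(x-\epsilon_{x,\delta}\mathbf{1})\}=\delta.$$ Then for every bounded set $D\subset\mathbb{R}^d$: - $\sup_{x\in D}\epsilon_{x,\delta}<\infty$ for every $\delta>0$; - $\sup_{x\in D}\epsilon_{x,\delta}\downarrow0$ as $\delta\downarrow0$.
   Context: $\mathbf{1}$ is the all-ones vector in $\mathbb{R}^d$. A function $g:\mathbb{R}^d\to\mathbb{R}$ is SISTr (strictly increasing under scalar translation) if, for every $x\in\mathbb{R}^d$, the map $c\in\mathbb{R}\mapsto g(x+c\mathbf{1})$ is strictly increasing and maps $\mathbb{R}$ onto $\mathbb{R}$. *)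

theory Defs
  imports "HOL-Analysis.Analysis"
begin

definition ones :: "real ^ 'd" where
  "ones = (\<chi> i. 1)"

definition SISTr :: "(real ^ 'd \<Rightarrow> real) \<Rightarrow> bool" where
  "SISTr g \<longleftrightarrow> (\<forall>x. strict_mono (\<lambda>c::real. g (x + c *\<^sub>R ones)) \<and>
                        surj (\<lambda>c::real. g (x + c *\<^sub>R ones)))"

definition eps_xd :: "(real ^ 'd \<Rightarrow> real) \<Rightarrow> real ^ 'd \<Rightarrow> real \<Rightarrow> real" where
  "eps_xd f x \<delta> = Inf {e. e > 0 \<and>
      min (f (x + e *\<^sub>R ones) - f x) (f x - f (x - e *\<^sub>R ones)) = \<delta>}"

end

theory Submission
  imports Defs
begin

definition MM :: "(real ^ 'd \<Rightarrow> real) \<Rightarrow> real ^ 'd \<Rightarrow> real \<Rightarrow> real" where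
  "MM f x e = min (f (x + e *\<^sub>R ones) - f x) (f x - f (x - e *\<^sub>R ones))"

lemma MM_smono:
  assumes "SISTr f" "a < b"
  shows "MM f x a < MM f x b"
proof -
  have sm: "strict_mono (\<lambda>c::real. f (x + c *\<^sub>R ones))" using assms(1) by (simp add: SISTr_def)
  have "f (x + a *\<^sub>R ones) < f (x + b *\<^sub>R ones)" using sm assms(2) by (simp add: strict_mono_def)
  moreover have "f (x + (-b) *\<^sub>R ones) < f (x + (-a) *\<^sub>R ones)"
    using sm[unfolded strict_mono_def, rule_format, of "-b" "-a"] assms(2) by simp
  moreover have "x + (-b) *\<^sub>R ones = x - b *\<^sub>R ones" "x + (-a) *\<^sub>R ones = x - a *\<^sub>R ones"
    by (simp_all add: algebra_simps)
  ultimately show ?thesis unfolding MM_def by (simp only:)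
qed

lemma MM_0: "MM f x 0 = 0" by (simp add: MM_def)

lemma MM_big:
  assumes "SISTr f"
  shows "\<exists>e\<ge>0. MM f x e \<ge> t"
proof -
  have "surj (\<lambda>c::real. f (x + c *\<^sub>R ones))" using assms by (simp add: SISTr_def)
  then have su: "\<forall>y. \<exists>c. y = f (x + c *\<^sub>R ones)" unfolding surj_def by simp
  obtain e1 where e1: "f x + \<bar>t\<bar> = f (x + e1 *\<^sub>R ones)" using su by blast
  obtain e2 where e2: "f x - \<bar>t\<bar> = f (x + e2 *\<^sub>R ones)" using su by blast
  define e where "e = max 0 (max e1 (-e2))"
  have sm: "strict_mono (\<lambda>c::real. f (x + c *\<^sub>R ones))" using assms(1) by (simp add: SISTr_def)
  have le1: "e1 \<le> e" and le2: "-e \<le> e2" and e0: "e \<ge> 0" unfolding e_def by auto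
  have A: "f (x + e1 *\<^sub>R ones) \<le> f (x + e *\<^sub>R ones)"
    using strict_mono_less_eq[OF sm] le1 by blast
  have B: "f (x + (-e) *\<^sub>R ones) \<le> f (x + e2 *\<^sub>R ones)"
    using strict_mono_less_eq[OF sm] le2 by blast
  have C: "x + (-e) *\<^sub>R ones = x - e *\<^sub>R ones" by simp
  have B': "f (x - e *\<^sub>R ones) \<le> f (x + e2 *\<^sub>R ones)" using B unfolding C .
  have "f (x + e *\<^sub>R ones) - f x \<ge> t" using A e1 by linarith
  moreover have "f x - f (x - e *\<^sub>R ones) \<ge> t" using B' e2 by linarith
  ultimately have "MM f x e \<ge> t" unfolding MM_def by simp
  then show ?thesis using e0 by blast
qed

lemma MM_cont:
  assumes "continuous_on UNIV f"
  shows "continuous_on S (\<lambda>x. MM f x e)"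
proof -
  have "continuous_on S (\<lambda>x. f (x + e *\<^sub>R ones))"
    by (rule continuous_on_compose2[OF assms]) (auto intro!: continuous_intros)
  moreover have "continuous_on S (\<lambda>x. f (x - e *\<^sub>R ones))"
    by (rule continuous_on_compose2[OF assms]) (auto intro!: continuous_intros)
  moreover have "continuous_on S f" using assms continuous_on_subset by blast
  ultimately show ?thesis unfolding MM_def
    by (intro continuous_intros) 
qed

lemma eps_char:
  assumes "SISTr f" "continuous_on UNIV f" "\<delta> > 0"
  shows "eps_xd f x \<delta> > 0 \<and> MM f x (eps_xd f x \<delta>) = \<delta>"
proof -
  obtain e where e: "e \<ge> 0" "MM f x e \<ge> \<delta>" using MM_big[OF assms(1)] by blast
  have cont: "continuous_on {0..e} (MM f x)"
  proof -
    have "continuous_on {0..e} (\<lambda>c. f (x + c *\<^sub>R ones))"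
      by (rule continuous_on_compose2[OF assms(2)]) (auto intro!: continuous_intros)
    moreover have "continuous_on {0..e} (\<lambda>c. f (x - c *\<^sub>R ones))"
      by (rule continuous_on_compose2[OF assms(2)]) (auto intro!: continuous_intros)
    ultimately have "continuous_on {0..e} (\<lambda>c. min (f (x + c *\<^sub>R ones) - f x) (f x - f (x - c *\<^sub>R ones)))"
      by (intro continuous_intros) auto
    then show ?thesis by (simp add: MM_def[abs_def])
  qed
  obtain e0 where e0: "0 \<le> e0" "e0 \<le> e" "MM f x e0 = \<delta>"
    using IVT'[of "MM f x" 0 \<delta> e] cont e MM_0[of f x] assms(3) by auto
  have e0p: "e0 > 0" using e0 MM_0[of f x] assms(3) by (cases "e0 = 0") auto
  have "{e. e > 0 \<and> min (f (x + e *\<^sub>R ones) - f x) (f x - f (x - e *\<^sub>R ones)) = \<delta>} = {e0}"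
  proof -
    have uq: "e' = e0" if "e' > 0" "min (f (x + e' *\<^sub>R ones) - f x) (f x - f (x - e' *\<^sub>R ones)) = \<delta>" for e'
    proof -
      have "MM f x e' = \<delta>" using that by (simp add: MM_def)
      then show "e' = e0" using e0 MM_smono[OF assms(1), of e' e0 x] MM_smono[OF assms(1), of e0 e' x]
        by (cases e' e0 rule: linorder_cases) auto
    qed
    have "min (f (x + e0 *\<^sub>R ones) - f x) (f x - f (x - e0 *\<^sub>R ones)) = \<delta>" using e0 by (simp add: MM_def)
    then show ?thesis using uq e0p by blast
  qed
  then have "eps_xd f x \<delta> = e0" unfolding eps_xd_def by simp
  then show ?thesis using e0 e0p by simp
qed

lemma eps_le:
  assumes "SISTr f" "continuous_on UNIV f" "\<delta> > 0" "\<delta> \<le> MM f x e"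
  shows "eps_xd f x \<delta> \<le> e"
proof (rule ccontr)
  assume "\<not> ?thesis"
  then have "MM f x e < MM f x (eps_xd f x \<delta>)" using MM_smono[OF assms(1)] by simp
  then show False using eps_char[OF assms(1-3), of x] assms(4) by simp
qed

theorem lemma4p6:
  fixes f :: "real ^ 'd \<Rightarrow> real" and D :: "(real ^ 'd) set"
  assumes lip: "\<exists>L. L-lipschitz_on UNIV f"
    and sistr: "SISTr f"
    and bnd: "bounded D" and ne: "D \<noteq> {}"
  shows "(\<forall>\<delta>>0. bdd_above ((\<lambda>x. eps_xd f x \<delta>) ` D))
       \<and> mono_on {0<..} (\<lambda>\<delta>. Sup ((\<lambda>x. eps_xd f x \<delta>) ` D))
       \<and> ((\<lambda>\<delta>. Sup ((\<lambda>x. eps_xd f x \<delta>) ` D)) \<longlongrightarrow> 0) (at_right 0)"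
proof -
  obtain L where L: "L-lipschitz_on UNIV f" using lip by blast
  have L0: "L \<ge> 0" using lipschitz_on_nonneg[OF L] .
  have fc: "continuous_on UNIV f" using lipschitz_on_continuous_on[OF L] .
  obtain x0 where x0: "x0 \<in> D" using ne by blast
  obtain R where R: "\<And>x. x \<in> D \<Longrightarrow> dist x0 x \<le> R" using bnd bounded_any_center by blast
  have lipd: "\<bar>f a - f b\<bar> \<le> L * dist a b" for a b
    using lipschitz_onD[OF L, of a b] by (simp add: dist_real_def)
  have bdd: "bdd_above ((\<lambda>x. eps_xd f x \<delta>) ` D)" if d: "\<delta> > 0" for \<delta>
  proof -
    obtain E where E: "E \<ge> 0" "MM f x0 E \<ge> \<delta> + 2 * L * R" using MM_big[OF sistr] by blast
    have "eps_xd f x \<delta> \<le> E" if x: "x \<in> D" for x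
    proof (rule eps_le[OF sistr fc d])
      have dx: "L * dist x x0 \<le> L * R" using R[OF x] L0 by (simp add: dist_commute mult_left_mono)
      have "dist (x + E *\<^sub>R ones) (x0 + E *\<^sub>R ones) = dist x x0"
        by (simp add: dist_norm algebra_simps)
      moreover have "dist (x - E *\<^sub>R ones) (x0 - E *\<^sub>R ones) = dist x x0"
        by (simp add: dist_norm algebra_simps)
      ultimately have "\<bar>f (x + E *\<^sub>R ones) - f (x0 + E *\<^sub>R ones)\<bar> \<le> L * R \<and>
        \<bar>f (x - E *\<^sub>R ones) - f (x0 - E *\<^sub>R ones)\<bar> \<le> L * R \<and> \<bar>f x - f x0\<bar> \<le> L * R"
        using lipd[of "x + E *\<^sub>R ones" "x0 + E *\<^sub>R ones"] lipd[of "x - E *\<^sub>R ones" "x0 - E *\<^sub>R ones"]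
          lipd[of x x0] dx by (simp only:) linarith
      then show "\<delta> \<le> MM f x E" using E unfolding MM_def by (auto simp: abs_le_iff)
    qed
    then show ?thesis unfolding bdd_above_def by blast
  qed
  have mono: "mono_on {0<..} (\<lambda>\<delta>. Sup ((\<lambda>x. eps_xd f x \<delta>) ` D))"
  proof (rule mono_onI)
    fix a b :: real assume ab: "a \<in> {0<..}" "b \<in> {0<..}" "a \<le> b"
    have a0: "0 < a" and b0: "0 < b" using ab by auto
    have le: "eps_xd f x a \<le> eps_xd f x b" for x
    proof -
      have h: "MM f x (eps_xd f x b) = b" using eps_char[OF sistr fc b0] by blast
      show ?thesis by (rule eps_le[OF sistr fc a0]) (use h ab(3) in simp)
    qed
    show "Sup ((\<lambda>x. eps_xd f x a) ` D) \<le> Sup ((\<lambda>x. eps_xd f x b) ` D)"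
      by (rule cSUP_mono[OF ne bdd[OF b0]]) (use le in blast)
  qed
  have lim: "((\<lambda>\<delta>. Sup ((\<lambda>x. eps_xd f x \<delta>) ` D)) \<longlongrightarrow> 0) (at_right 0)"
  proof (rule tendstoI)
    fix \<epsilon> :: real assume ep: "\<epsilon> > 0"
    have cpt: "compact (closure D)" using bnd by (simp add: compact_closure)
    have cne: "closure D \<noteq> {}" using ne by simp
    obtain x1 where x1: "x1 \<in> closure D" "\<And>y. y \<in> closure D \<Longrightarrow> MM f x1 (\<epsilon>/2) \<le> MM f y (\<epsilon>/2)"
      using continuous_attains_inf[OF cpt cne MM_cont[OF fc]] by blast
    define c where "c = MM f x1 (\<epsilon>/2)"
    have c0: "c > 0" using MM_smono[OF sistr, of 0 "\<epsilon>/2" x1] ep MM_0[of f x1] unfolding c_def by simp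
    have main: "dist (Sup ((\<lambda>x. eps_xd f x \<delta>) ` D)) 0 < \<epsilon>" if d0: "0 < \<delta>" and dc: "\<delta> < c" for \<delta>
    proof -
      have le: "eps_xd f x \<delta> \<le> \<epsilon>/2" if xD: "x \<in> D" for x
      proof -
        have "x \<in> closure D" using closure_subset xD by blast
        then have "c \<le> MM f x (\<epsilon>/2)" using x1(2) unfolding c_def by blast
        then have "\<delta> \<le> MM f x (\<epsilon>/2)" using dc by linarith
        then show ?thesis by (rule eps_le[OF sistr fc d0])
      qed
      have s1: "Sup ((\<lambda>x. eps_xd f x \<delta>) ` D) \<le> \<epsilon>/2" by (rule cSUP_least[OF ne]) (rule le)
      have s2: "eps_xd f x0 \<delta> \<le> Sup ((\<lambda>x. eps_xd f x \<delta>) ` D)"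
        by (rule cSUP_upper[OF x0 bdd[OF d0]])
      have s3: "eps_xd f x0 \<delta> > 0" using eps_char[OF sistr fc d0, of x0] by blast
      show ?thesis using s1 s2 s3 ep by (simp add: dist_real_def)
    qed
    show "\<forall>\<^sub>F \<delta> in at_right 0. dist (Sup ((\<lambda>x. eps_xd f x \<delta>) ` D)) 0 < \<epsilon>"
      unfolding eventually_at_right_field using c0 main by blast
  qed
  have b: "\<forall>\<delta>>0. bdd_above ((\<lambda>x. eps_xd f x \<delta>) ` D)" using bdd by simp
  show ?thesis using b mono lim by (intro conjI)
qed

end
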